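(* Let $n\ge 1$, $m\ge 1$, and let $\lambda=(\lambda_1,\ldots,\lambda_n)\in\mathbb{R}_{<0}^n$ (not necessarily distinct). Consider the $n$-th order linear system $$x^{(n)}=-\kappa_{0,\lambda}x^{(0)}-\kappa_{1,\lambda}x^{(1)}-\cdots-\kappa_{n-1,\lambda}x^{(n-1)},\qquad x(t)\in\mathbb{R}^m,$$ whose characteristic polynomial $s^n+\sum_{k=0}^{n-1}\kappa_{k,\lambda}s^k$ has roots $\lambda_1,\ldots,\lambda_n$. Let $x(t)$ be its solution starting at $t=0$ from an arbitrary initial state $(x^{(0)}_0,\ldots,x^{(n-1)}_0)\in\mathbb{R}^{n\times m}$. Let $\lambda_{\neg\max}$ be the $(n-1)$-tuple obtained from $\lambda$ by removing one entry equal to $\max(\lambda_1,\ldots,\lambda_n)$. Then for all $t\ge 0$, $$x(t)\in\operatorname{conv}\left\{\sum_{j=0}^{i-1}\frac{\kappa_{j,\lambda_{\neg\max}}}{\kappa_{0,\lambda_{\neg\max}}}x^{(j)}_0 \;:\; i=0,1,\ldots,n\right\},$$ i.e. $x(t)$ lies in the convex hull of $0,\ x^{(0)}_0,\ x^{(0)}_0+\frac{\kappa_{1,\lambda_{\neg\max}}}{\kappa_{0,\lambda_{\neg\max}}}x^{(1)}_0,\ \ldots,\ \sum_{j=0}^{n-1}\frac{\kappa_{j,\lambda_{\neg\max}}}{\kappa_{0,\lambda_{\neg\max}}}x^{(j)}_0$.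
   Context: $x^{(k)}$ denotes the $k$-th time derivative of $x$. For a finite tuple $\mu=(\mu_1,\ldots,\mu_p)$ of complex numbers (possibly empty, $p=0$), the companion coefficients are $\kappa_{k,\mu}=(-1)^{p-k}\sum_{I\subseteq\{1,\ldots,p\},\,|I|=p-k}\prod_{i\in I}\mu_i$ for $0\le k\le p$ (empty sum $=0$, empty product $=1$), so that $\prod_{i=1}^p(s-\mu_i)=\sum_{k=0}^{p}\kappa_{k,\mu}s^k$ and $\kappa_{p,\mu}=1$; also $\kappa_{k,\mu}=0$ for $k\notin\{0,\ldots,p\}$. An empty sum of vectors is $0$. $\operatorname{conv}$ denotes convex hull. *)

theory Defs
  imports "HOL-Analysis.Analysis"
begin

text \<open>Companion coefficients of a tuple mu = (mu_1,...,mu_p) given as a list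
(0-based indices): the coefficient of s^k in prod_i (s - mu_i).\<close>
definition kappa :: "nat \<Rightarrow> 'a::comm_ring_1 list \<Rightarrow> 'a" where
  "kappa k mu = (if k \<le> length mu then
     (-1) ^ (length mu - k) *
       (\<Sum>I\<in>{I. I \<subseteq> {0..<length mu} \<and> card I = length mu - k}. \<Prod>i\<in>I. mu ! i)
   else 0)"

text \<open>X is the family of derivatives x^(0), ..., x^(n) of a solution on [0, inf)
of x^(n) = - sum_{k<n} kappa_k x^(k), with initial data x0 0, ..., x0 (n-1).\<close>
definition is_solution ::
  "real list \<Rightarrow> (nat \<Rightarrow> 'a::real_normed_vector) \<Rightarrow> (nat \<Rightarrow> real \<Rightarrow> 'a) \<Rightarrow> bool" where
  "is_solution lam x0 X \<longleftrightarrow>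
     (\<forall>k<length lam. \<forall>t\<ge>0. (X k has_vector_derivative X (Suc k) t) (at t within {0..})) \<and>
     (\<forall>t\<ge>0. X (length lam) t = - (\<Sum>k<length lam. kappa k lam *\<^sub>R X k t)) \<and>
     (\<forall>k<length lam. X k 0 = x0 k)"

end

theory Submission imports Defs "HOL-Computational_Algebra.Polynomial" "HOL-Library.Multiset" begin


definition Pk :: "'a::comm_ring_1 list \<Rightarrow> 'a poly" where
  "Pk mu = prod_list (map (\<lambda>m. [:-m,1:]) mu)"

lemma prod_const_poly: "finite B \<Longrightarrow> (\<Prod>i\<in>B. [:f i:]) = [:\<Prod>i\<in>B. f i:]"
  by (induction B rule: finite_induct) (auto simp: mult.commute)

lemma lin_poly: "[:c, 1:] = [:c:] + (monom 1 1 :: 'a::comm_ring_1 poly)"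
  by (simp add: monom_altdef)

lemma Pk_alt: "Pk mu = (\<Prod>i\<in>{0..<length mu}. [:- (mu!i):] + monom 1 1)"
proof -
  have "Pk mu = (\<Prod>i\<in>{0..<length mu}. [:-(mu!i),1:])"
    unfolding Pk_def prod.list_conv_set_nth by simp
  then show ?thesis by (simp only: lin_poly)
qed

lemma kappa_coeff: "kappa k mu = coeff (Pk mu) k"
proof -
  define A where "A = {0..<length mu}"
  define n where "n = length mu"
  have fA: "finite A" by (simp add: A_def)
  have "Pk mu = (\<Sum>B\<in>Pow A. (\<Prod>i\<in>B. [:- (mu!i):]) * (\<Prod>i\<in>A-B. monom 1 1))"
    unfolding Pk_alt A_def[symmetric] by (rule prod_add[OF fA])
  also have "\<dots> = (\<Sum>B\<in>Pow A. monom (\<Prod>i\<in>B. - (mu!i)) (card (A-B)))"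
  proof (intro sum.cong refl)
    fix B assume "B \<in> Pow A"
    hence "finite B" using fA by (auto intro: finite_subset)
    thus "(\<Prod>i\<in>B. [:- (mu!i):]) * (\<Prod>i\<in>A-B. monom 1 1) = monom (\<Prod>i\<in>B. - (mu!i)) (card (A-B))"
      by (simp add: prod_const_poly monom_altdef)
  qed
  finally have "coeff (Pk mu) k = (\<Sum>B\<in>Pow A. if card (A-B) = k then (\<Prod>i\<in>B. - (mu!i)) else 0)"
    by (simp add: coeff_sum coeff_monom)
  also have "\<dots> = (\<Sum>B\<in>{B\<in>Pow A. card (A-B) = k}. (\<Prod>i\<in>B. - (mu!i)))"
    by (simp add: sum.inter_filter[symmetric] fA)
  finally have eq: "coeff (Pk mu) k = (\<Sum>B\<in>{B\<in>Pow A. card (A-B) = k}. (\<Prod>i\<in>B. - (mu!i)))" .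
  have cA: "card A = n" by (simp add: A_def n_def)
  show ?thesis
  proof (cases "k \<le> n")
    case True
    have S: "{B\<in>Pow A. card (A-B) = k} = {I. I \<subseteq> {0..<length mu} \<and> card I = length mu - k}"
    proof -
      have "B \<subseteq> A \<Longrightarrow> card (A - B) = n - card B \<and> card B \<le> n" for B
        using card_Diff_subset[of B A] fA cA card_mono[of A B] by (auto intro: finite_subset)
      then show ?thesis using True by (auto simp: A_def n_def)
    qed
    have "kappa k mu = (\<Sum>I\<in>{I. I \<subseteq> {0..<length mu} \<and> card I = length mu - k}. (-1) ^ (length mu - k) * (\<Prod>i\<in>I. mu ! i))"
      using True by (simp add: kappa_def n_def sum_distrib_left)
    also have "\<dots> = (\<Sum>I\<in>{I. I \<subseteq> {0..<length mu} \<and> card I = length mu - k}. (\<Prod>i\<in>I. - (mu ! i)))"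
      by (intro sum.cong refl) (simp add: prod_uminus)
    also have "\<dots> = coeff (Pk mu) k" by (simp only: eq S)
    finally show ?thesis .
  next
    case False
    have "{B\<in>Pow A. card (A-B) = k} = {}"
    proof -
      have "B \<subseteq> A \<Longrightarrow> card (A - B) \<le> n" for B
        using fA cA card_mono[of A "A-B"] by auto
      note H = this
      show ?thesis
      proof (rule equals0I)
        fix B assume "B \<in> {B\<in>Pow A. card (A-B) = k}"
        then have "B \<subseteq> A" "card (A-B) = k" by auto
        then show False using H[of B] False by linarith
      qed
    qed
    note E = this
    have "coeff (Pk mu) k = 0" unfolding eq E by simp
    then show ?thesis using False by (simp add: kappa_def n_def)
  qed
qed

lemma kappa_perm: "mset mu = mset nu \<Longrightarrow> kappa k mu = kappa k nu"
proof -
  assume h: "mset mu = mset nu"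
  have Pm: "Pk mu = prod_mset (image_mset (\<lambda>m. [:-m,1:]) (mset mu))" for mu :: "'a list"
    unfolding Pk_def by (metis mset_map prod_mset_prod_list)
  have "Pk mu = Pk nu" by (simp only: Pm h)
  then show ?thesis by (simp only: kappa_coeff)
qed

lemma kappa_Cons: "kappa k (m # mu) = (case k of 0 \<Rightarrow> 0 | Suc j \<Rightarrow> kappa j mu) - m * kappa k mu"
  unfolding kappa_coeff Pk_def by (cases k) (simp_all add: coeff_pCons algebra_simps)

lemma kappa_len: "kappa (length mu) mu = 1"
proof -
  have "{I. I \<subseteq> {0..<length mu} \<and> card I = 0} = {{}}"
    by (auto intro: finite_subset simp: card_eq_0_iff)
  then show ?thesis by (simp add: kappa_def)
qed

lemma kappa_pos: "(\<forall>x\<in>set mu. (x::real) < 0) \<Longrightarrow> (kappa k mu \<ge> 0) \<and> (k \<le> length mu \<longrightarrow> kappa k mu > 0)"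
proof (induction mu arbitrary: k)
  case Nil
  then show ?case by (simp add: kappa_coeff Pk_def coeff_1)
next
  case (Cons m mu)
  have m: "m < 0" using Cons.prems by simp
  have IH: "\<And>k. kappa k mu \<ge> 0 \<and> (k \<le> length mu \<longrightarrow> kappa k mu > 0)" using Cons by simp
  show ?case
  proof (cases k)
    case 0
    then show ?thesis using IH[of 0] m mult_neg_pos[of m "kappa 0 mu"] by (simp add: kappa_Cons)
  next
    case (Suc j)
    have "0 \<le> - m * kappa k mu" using IH[of k] m mult_nonpos_nonneg[of m "kappa k mu"] by simp
    then show ?thesis using IH[of j] Suc by (auto simp add: kappa_Cons)
  qed
qed



lemma hull_step:
  fixes x w :: "real \<Rightarrow> 'a::euclidean_space" and V :: "'a set"
  assumes m: "m < 0" and fV: "finite V" and wV: "\<forall>s\<ge>0. w s \<in> convex hull V"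
    and der: "\<forall>s\<ge>0. (x has_vector_derivative (m *\<^sub>R x s + w s)) (at s within {0..})"
    and t: "t \<ge> 0"
  shows "x t \<in> convex hull (insert (x 0) ((\<lambda>v. (-1/m) *\<^sub>R v) ` V))"
proof (rule ccontr)
  define K where "K = convex hull (insert (x 0) ((\<lambda>v. (-1/m) *\<^sub>R v) ` V))"
  assume "x t \<notin> convex hull (insert (x 0) ((\<lambda>v. (-1/m) *\<^sub>R v) ` V))"
  hence nK: "x t \<notin> K" by (simp add: K_def)
  have "compact K" unfolding K_def using fV by (intro finite_imp_compact_convex_hull) auto
  hence "closed K" by (rule compact_imp_closed)
  moreover have "convex K" unfolding K_def by simp
  ultimately obtain a b where ab: "inner a (x t) < b" "\<forall>y\<in>K. inner a y > b"
    using separating_hyperplane_closed_point[OF _ _ nK] by blast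
  have h0: "inner a (x 0) > b" using ab(2) unfolding K_def by (simp add: hull_inc)
  have hw: "inner a (w s) > - m * b" if s: "s \<ge> 0" for s
  proof -
    have "(-1/m) *\<^sub>R w s \<in> (\<lambda>v. (-1/m) *\<^sub>R v) ` (convex hull V)" using wV s by auto
    also have "\<dots> = convex hull ((\<lambda>v. (-1/m) *\<^sub>R v) ` V)" by (rule convex_hull_scaling[symmetric])
    also have "\<dots> \<subseteq> K" unfolding K_def by (intro hull_mono) auto
    finally have "inner a ((-1/m) *\<^sub>R w s) > b" using ab(2) by blast
    hence "(-1/m) * inner a (w s) > b" by simp
    hence "(-m) * ((-1/m) * inner a (w s)) > (-m) * b" using m by (intro mult_strict_left_mono) auto
    thus ?thesis using m by (simp add: field_simps)
  qed
  define h where "h s = exp (- (m * s)) * (inner a (x s) - b)" for s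
  have dh: "(h has_real_derivative exp (- (m * s)) * (inner a (w s) + m * b)) (at s within {0..})"
    if s: "s \<ge> 0" for s
  proof -
    have d1: "((\<lambda>s. inner a (x s)) has_real_derivative inner a (m *\<^sub>R x s + w s)) (at s within {0..})"
      unfolding has_real_derivative_iff_has_vector_derivative
      by (rule bounded_linear.has_vector_derivative[OF bounded_linear_inner_right]) (use der s in auto)
    have d2: "((\<lambda>s. exp (- (m * s))) has_real_derivative exp (- (m * s)) * (-m)) (at s within {0..})"
      by (auto intro!: derivative_eq_intros)
    have "(h has_real_derivative exp (- (m * s)) * (-m) * (inner a (x s) - b) + inner a (m *\<^sub>R x s + w s) * exp (- (m * s))) (at s within {0..})"
    proof -
      have d3: "((\<lambda>s. inner a (x s) - b) has_real_derivative inner a (m *\<^sub>R x s + w s)) (at s within {0..})"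
        using DERIV_diff[OF d1 DERIV_const[of b]] by simp
      show ?thesis unfolding h_def by (rule DERIV_mult[OF d2 d3])
    qed
    moreover have "exp (- (m * s)) * (-m) * (inner a (x s) - b) + inner a (m *\<^sub>R x s + w s) * exp (- (m * s))
        = exp (- (m * s)) * (inner a (w s) + m * b)" by (simp add: inner_add_right algebra_simps)
    ultimately show ?thesis by simp
  qed
  have "h 0 \<le> h t"
  proof (rule DERIV_nonneg_imp_increasing_open[OF t])
    fix s assume s: "0 < s" "s < t"
    have "at s within {0..} = at s" by (rule at_within_interior) (use s in simp)
    then have "DERIV h s :> exp (- (m * s)) * (inner a (w s) + m * b)" using dh[of s] s by simp
    moreover have "exp (- (m * s)) * (inner a (w s) + m * b) \<ge> 0" using hw[of s] s by simp
    ultimately show "\<exists>y. DERIV h s :> y \<and> 0 \<le> y" by blast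
  next
    have "continuous_on {0..} h"
      unfolding continuous_on_eq_continuous_within using dh DERIV_continuous by fastforce
    then show "continuous_on {0..t} h" by (rule continuous_on_subset) auto
  qed
  moreover have "h 0 > 0" using h0 by (simp add: h_def)
  moreover have "h t < 0" using ab(1) by (simp add: h_def mult_pos_neg)
  ultimately show False by simp
qed


lemma shift_id:
  fixes x0 :: "nat \<Rightarrow> 'a::real_vector"
  shows "(\<Sum>j<i. kappa j mu *\<^sub>R (x0 (Suc j) - m *\<^sub>R x0 j)) =
    (\<Sum>j<i. kappa j (m # mu) *\<^sub>R x0 j) + (case i of 0 \<Rightarrow> 0 | Suc j \<Rightarrow> kappa j mu) *\<^sub>R x0 i"
proof (induction i)
  case 0
  then show ?case by simp
next
  case (Suc i)
  have "kappa i (m # mu) *\<^sub>R x0 i = (case i of 0 \<Rightarrow> 0 | Suc j \<Rightarrow> kappa j mu) *\<^sub>R x0 i - (m * kappa i mu) *\<^sub>R x0 i"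
    by (simp add: kappa_Cons scaleR_left_diff_distrib)
  then show ?case using Suc by (simp add: algebra_simps)
qed

lemma sum_cons_id:
  fixes Y :: "nat \<Rightarrow> 'a::real_vector"
  assumes "length L = N"
  shows "(\<Sum>k\<le>Suc N. kappa k (m # L) *\<^sub>R Y k) = (\<Sum>k\<le>N. kappa k L *\<^sub>R (Y (Suc k) - m *\<^sub>R Y k))"
proof -
  have z: "kappa (Suc N) L = 0" using assms by (simp add: kappa_def)
  have "(\<Sum>k\<le>Suc N. kappa k (m # L) *\<^sub>R Y k) =
      (\<Sum>k\<le>Suc N. (case k of 0 \<Rightarrow> 0 | Suc j \<Rightarrow> kappa j L) *\<^sub>R Y k) - (\<Sum>k\<le>Suc N. (m * kappa k L) *\<^sub>R Y k)"
    by (simp add: kappa_Cons scaleR_left_diff_distrib sum_subtractf)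
  also have "(\<Sum>k\<le>Suc N. (case k of 0 \<Rightarrow> 0 | Suc j \<Rightarrow> kappa j L) *\<^sub>R Y k) = (\<Sum>k\<le>N. kappa k L *\<^sub>R Y (Suc k))"
    by (simp only: sum.atMost_Suc_shift) simp
  also have "(\<Sum>k\<le>Suc N. (m * kappa k L) *\<^sub>R Y k) = (\<Sum>k\<le>N. (m * kappa k L) *\<^sub>R Y k)"
    using z by simp
  finally show ?thesis by (simp add: algebra_simps sum_subtractf scaleR_sum_right)
qed

lemma finite_setof: "finite {f i | i. i \<le> (N::nat)}"
proof -
  have "{f i | i. i \<le> N} = f ` {..N}" by auto
  then show ?thesis by simp
qed

lemma main_G:
  fixes X :: "nat \<Rightarrow> real \<Rightarrow> 'a::euclidean_space" and x0 :: "nat \<Rightarrow> 'a"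
  shows "mset lam = mset (a # mu) \<Longrightarrow> (\<forall>l\<in>set lam. l < 0) \<Longrightarrow> is_solution lam x0 X \<Longrightarrow> t \<ge> 0 \<Longrightarrow>
     X 0 t \<in> convex hull {\<Sum>j<i. (kappa j mu / kappa 0 mu) *\<^sub>R x0 j | i. i \<le> length lam}"
proof (induction mu arbitrary: lam X x0 t)
  case Nil
  have lam: "lam = [a]" using Nil.prems(1) by simp
  have a: "a < 0" using Nil.prems(2) lam by simp
  have k0: "kappa 0 ([]::real list) = 1" using kappa_len[of "[]::real list"] by simp
  have ka: "kappa 0 [a] = - a" by (simp add: kappa_Cons k0)
  have sol: "\<forall>s\<ge>0. (X 0 has_vector_derivative X 1 s) (at s within {0..})"
    "\<forall>s\<ge>0. X 1 s = a *\<^sub>R X 0 s" "X 0 0 = x0 0"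
    using Nil.prems(3) unfolding is_solution_def lam by (auto simp: ka)
  have "X 0 t \<in> convex hull (insert (X 0 0) ((\<lambda>v. (-1/a) *\<^sub>R v) ` {0}))"
    by (rule hull_step[OF a, where w = "\<lambda>_. 0"]) (use sol Nil.prems(4) in auto)
  also have "\<dots> \<subseteq> convex hull {\<Sum>j<i. (kappa j [] / kappa 0 []) *\<^sub>R x0 j | i. i \<le> length lam}"
  proof -
    have m1: "X 0 0 \<in> {\<Sum>j<i. (kappa j [] / kappa 0 []) *\<^sub>R x0 j | i. i \<le> length lam}"
      using sol(3) k0 lam by (intro CollectI exI[of _ 1]) simp
    have m2: "0 \<in> {\<Sum>j<i. (kappa j [] / kappa 0 []) *\<^sub>R x0 j | i. i \<le> length lam}"
      by (intro CollectI exI[of _ 0]) simp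
    show ?thesis by (intro hull_mono) (use m1 m2 in auto)
  qed
  finally show ?case .
next
  case (Cons m mu)
  define n where "n = length lam"
  have mlam: "m \<in> set lam" using arg_cong[OF Cons.prems(1), of set_mset] by simp
  define lam' where "lam' = remove1 m lam"
  have ms': "mset lam' = mset (a # mu)" using Cons.prems(1) by (simp add: lam'_def)
  have msl: "mset lam = mset (m # lam')" using mlam by (simp add: lam'_def)
  have n: "n = Suc (length lam')" unfolding n_def using mset_eq_length[OF msl] by simp
  define N where "N = length lam'"
  have neg: "\<forall>l\<in>set lam. l < 0" by (rule Cons.prems(2))
  have neg': "\<forall>l\<in>set lam'. l < 0" using neg by (metis lam'_def notin_set_remove1)
  have m: "m < 0" using neg mlam by blast
  have sets: "set lam = set (a # m # mu)" using arg_cong[OF Cons.prems(1), of set_mset] by simp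
  have negmu: "\<forall>l\<in>set (m # mu). l < 0" using neg sets by auto
  have sol: "\<forall>k<n. \<forall>s\<ge>0. (X k has_vector_derivative X (Suc k) s) (at s within {0..})"
    "\<forall>s\<ge>0. X n s = - (\<Sum>k<n. kappa k lam *\<^sub>R X k s)" "\<forall>k<n. X k 0 = x0 k"
    using Cons.prems(3) unfolding is_solution_def n_def by auto
  define W where "W k s = X (Suc k) s - m *\<^sub>R X k s" for k s
  define w0 where "w0 k = x0 (Suc k) - m *\<^sub>R x0 k" for k
  have solW: "is_solution lam' w0 W"
    unfolding is_solution_def
  proof (intro conjI allI impI)
    fix k s assume k: "k < length lam'" and s: "(0::real) \<le> s"
    have d1: "(X (Suc k) has_vector_derivative X (Suc (Suc k)) s) (at s within {0..})" using sol(1) k s n by auto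
    have d2: "(X k has_vector_derivative X (Suc k) s) (at s within {0..})" using sol(1) k s n by auto
    have d3: "((\<lambda>s. m *\<^sub>R X k s) has_vector_derivative m *\<^sub>R X (Suc k) s) (at s within {0..})"
      by (rule bounded_linear.has_vector_derivative[OF bounded_linear_scaleR_right d2])
    show "(W k has_vector_derivative W (Suc k) s) (at s within {0..})"
      unfolding W_def[abs_def] using has_vector_derivative_diff[OF d1 d3] by simp
  next
    fix s :: real assume s: "0 \<le> s"
    have kn: "kappa n lam = 1" using kappa_len[of lam] by (simp add: n_def)
    have "(\<Sum>k\<le>n. kappa k lam *\<^sub>R X k s) = (\<Sum>k<n. kappa k lam *\<^sub>R X k s) + X n s"
      using kn by (simp add: lessThan_Suc_atMost[symmetric])
    also have "\<dots> = 0" using sol(2) s by simp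
    finally have z: "(\<Sum>k\<le>n. kappa k lam *\<^sub>R X k s) = 0" .
    have "(\<Sum>k\<le>n. kappa k lam *\<^sub>R X k s) = (\<Sum>k\<le>Suc N. kappa k (m # lam') *\<^sub>R X k s)"
      using kappa_perm[OF msl] n N_def by simp
    also have "\<dots> = (\<Sum>k\<le>N. kappa k lam' *\<^sub>R W k s)"
      unfolding W_def by (rule sum_cons_id) (simp add: N_def)
    also have "\<dots> = (\<Sum>k<N. kappa k lam' *\<^sub>R W k s) + W N s"
      using kappa_len[of lam'] by (simp add: lessThan_Suc_atMost[symmetric] N_def)
    finally have "(\<Sum>k<N. kappa k lam' *\<^sub>R W k s) + W N s = 0" using z by simp
    then show "W (length lam') s = - (\<Sum>k<length lam'. kappa k lam' *\<^sub>R W k s)"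
      unfolding N_def by (simp add: eq_neg_iff_add_eq_0 add.commute)
  next
    fix k assume k: "k < length lam'"
    then show "W k 0 = w0 k" unfolding W_def w0_def using sol(3) n by simp
  qed
  define V' where "V' = {\<Sum>j<i. (kappa j mu / kappa 0 mu) *\<^sub>R w0 j | i. i \<le> length lam'}"
  have IH: "\<forall>s\<ge>0. W 0 s \<in> convex hull V'"
    unfolding V'_def using Cons.IH[OF ms' neg' solW] by blast
  have n0: "0 < n" using n by simp
  have "X 0 t \<in> convex hull (insert (X 0 0) ((\<lambda>v. (-1/m) *\<^sub>R v) ` V'))"
  proof (rule hull_step[OF m _ IH _ Cons.prems(4)])
    show "finite V'" unfolding V'_def by (rule finite_setof)
    show "\<forall>s\<ge>0. (X 0 has_vector_derivative m *\<^sub>R X 0 s + W 0 s) (at s within {0..})"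
      using sol(1) n0 by (simp add: W_def)
  qed
  also have "\<dots> \<subseteq> convex hull {\<Sum>j<i. (kappa j (m # mu) / kappa 0 (m # mu)) *\<^sub>R x0 j | i. i \<le> length lam}"
    (is "_ \<subseteq> convex hull ?T")
  proof (rule hull_minimal)
    show "convex (convex hull ?T)" by simp
    define K where "K j = kappa j (m # mu)" for j
    define v where "v i = (\<Sum>j<i. (K j / K 0) *\<^sub>R x0 j)" for i
    have vT: "i \<le> n \<Longrightarrow> v i \<in> convex hull ?T" for i
    proof (rule hull_inc)
      assume "i \<le> n"
      then show "v i \<in> ?T" unfolding v_def K_def n_def by blast
    qed
    have K0: "K 0 > 0" using kappa_pos[OF negmu, of 0] by (simp add: K_def)
    have k0: "kappa 0 mu > 0" using kappa_pos[of mu 0] negmu by simp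
    have "v 1 = x0 0" using K0 by (simp add: v_def)
    moreover have "X 0 0 = x0 0" using sol(3) n0 by blast
    ultimately have A: "X 0 0 \<in> convex hull ?T"
      using vT[of 1] n0 by simp
    have B: "(-1/m) *\<^sub>R x \<in> convex hull ?T" if "x \<in> V'" for x
    proof -
    have "\<exists>i. x = (\<Sum>j<i. (kappa j mu / kappa 0 mu) *\<^sub>R w0 j) \<and> i \<le> length lam'"
      using that unfolding V'_def by (simp only: mem_Collect_eq)
    then obtain i where i: "i \<le> length lam'" and x: "x = (\<Sum>j<i. (kappa j mu / kappa 0 mu) *\<^sub>R w0 j)" by blast
    define cp where "cp = (case i of 0 \<Rightarrow> 0 | Suc j \<Rightarrow> kappa j mu)"
    have lmu: "length lam' = Suc (length mu)" using mset_eq_length[OF ms'] by simp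
    have Ki: "K i > 0" using kappa_pos[OF negmu, of i] i lmu by (simp add: K_def)
    have KiE: "K i = cp - m * kappa i mu" by (simp add: K_def cp_def kappa_Cons)
    have cp0: "cp \<ge> 0" unfolding cp_def using kappa_pos[of mu] negmu by (cases i) auto
    have kim: "- m * kappa i mu \<ge> 0" using kappa_pos[of mu i] negmu m by (simp add: mult_nonpos_nonneg)
    define \<theta> where "\<theta> = cp / K i"
    have th0: "\<theta> \<ge> 0" "\<theta> \<le> 1" using cp0 Ki KiE kim by (auto simp: \<theta>_def)
    have K0E: "K 0 = - m * kappa 0 mu" by (simp add: K_def kappa_Cons)
    have "(-1/m) *\<^sub>R (\<Sum>j<i. (kappa j mu / kappa 0 mu) *\<^sub>R w0 j)
        = (1 / K 0) *\<^sub>R (\<Sum>j<i. kappa j mu *\<^sub>R w0 j)"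
      using m k0 K0E by (simp add: scaleR_sum_right field_simps)
    also have "(\<Sum>j<i. kappa j mu *\<^sub>R w0 j) = (\<Sum>j<i. K j *\<^sub>R x0 j) + cp *\<^sub>R x0 i"
      unfolding w0_def K_def cp_def by (rule shift_id)
    also have "(1 / K 0) *\<^sub>R ((\<Sum>j<i. K j *\<^sub>R x0 j) + cp *\<^sub>R x0 i) = (1 - \<theta>) *\<^sub>R v i + \<theta> *\<^sub>R v (Suc i)"
    proof -
      have "(1 - \<theta>) *\<^sub>R v i + \<theta> *\<^sub>R v (Suc i) = v i + (\<theta> * (K i / K 0)) *\<^sub>R x0 i"
        by (simp add: v_def algebra_simps)
      also have "\<theta> * (K i / K 0) = cp / K 0" using Ki by (simp add: \<theta>_def)
      finally show ?thesis using K0 by (simp add: v_def scaleR_sum_right scaleR_add_right)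
    qed
    finally have eq: "(-1/m) *\<^sub>R (\<Sum>j<i. (kappa j mu / kappa 0 mu) *\<^sub>R w0 j) = (1 - \<theta>) *\<^sub>R v i + \<theta> *\<^sub>R v (Suc i)" .
    have "(1 - \<theta>) *\<^sub>R v i + \<theta> *\<^sub>R v (Suc i) \<in> convex hull ?T"
      by (rule convexD[OF convex_convex_hull vT vT]) (use i n th0 in \<open>auto simp: N_def\<close>)
    then show ?thesis using eq x by simp
    qed
    show "insert (X 0 0) ((\<lambda>v. (-1/m) *\<^sub>R v) ` V') \<subseteq> convex hull ?T" using A B by auto
  qed
  finally show ?case .
qed

theorem theorem1:
  fixes lam :: "real list" and x0 :: "nat \<Rightarrow> real ^ 'm" and X :: "nat \<Rightarrow> real \<Rightarrow> real ^ 'm"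
  assumes "length lam \<ge> 1"
    and "\<forall>l\<in>set lam. l < 0"
    and "is_solution lam x0 X"
    and "t \<ge> 0"
  shows "X 0 t \<in> convex hull
    {\<Sum>j<i. (kappa j (remove1 (Max (set lam)) lam) / kappa 0 (remove1 (Max (set lam)) lam)) *\<^sub>R x0 j
      | i. i \<le> length lam}"
proof -
  define a where "a = Max (set lam)"
  have ne: "set lam \<noteq> {}" using assms(1) by auto
  have "a \<in> set lam" unfolding a_def using ne by simp
  then have "mset lam = mset (a # remove1 a lam)" by simp
  then show ?thesis unfolding a_def[symmetric] using main_G assms(2-4) by blast
qed

end
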